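(* Consider the $(1,\lambda)$-CSA-ES with cumulation ($0<c<1$), any $\lambda\ge1$, $d_\sigma>0$, applied to $f(x)=[x]_1$ on $\mathbb{R}^n$. The real-valued Markov chain $([p_t]_1)_{t\in\mathbb{N}}$ is $\varphi$-irreducible and aperiodic, and every compact subset of $\mathbb{R}$ is a small set for it.
   Context: For $x\in\mathbb{R}^n$, $[x]_i$ denotes its $i$-th coordinate. The $(1,\lambda)$-CSA-ES with parameters $\lambda\ge1$, $0<c\le1$, $d_\sigma>0$, minimizing $f:\mathbb{R}^n\to\mathbb{R}$: start from $X_0\in\mathbb{R}^n$, $\sigma_0>0$, $p_0\sim\mathcal{N}(0,I_n)$; at iteration $t$ draw $\xi_{t,1},\ldots,\xi_{t,\lambda}$ i.i.d. $\sim\mathcal{N}(0,I_n)$ independent of the past, children $Y_{t,i}=X_t+\sigma_t\xi_{t,i}$; $X_{t+1}$ is the child with smallest $f$-value and $\xi^\star_t$ the corresponding $\xi_{t,i}$ (so $X_{t+1}=X_t+\sigma_t\xi^\star_t$); path $p_{t+1}=(1-c)p_t+\sqrt{c(2-c)}\,\xi^\star_t$; step-size $\sigma_{t+1}=\sigma_t\exp(\frac{c}{2d_\sigma}(\|p_{t+1}\|^2/n-1))$. On $f(x)=[x]_1$, $([p_t]_1)_t$ satisfies $[p_{t+1}]_1=(1-c)[p_t]_1+\sqrt{c(2-c)}[\xi^\star_t]_1$ with $([\xi^\star_t]_1)_t$ i.i.d., each distributed as the minimum of $\lambda$ i.i.d. standard normals, so it is a Markov chain on $\mathbb{R}$ with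 transition kernel $P$. Definitions: the chain is $\varphi$-irreducible if there is a nonzero measure $\varphi$ on the Borel sets such that for every Borel $A$ with $\varphi(A)>0$ and every starting point, $A$ is reached in finitely many steps with positive probability. A Borel set $C$ is small if there exist $m\ge1$ and a nonzero measure $\nu_m$ with $P^m(x,B)\ge\nu_m(B)$ for all $x\in C$ and Borel $B$. The chain is aperiodic if there is no $d\ge2$ and disjoint Borel sets $D_1,\ldots,D_d$ with $P(x,D_{i+1})=1$ for all $x\in D_i$ (indices mod $d$) and $(\bigcup_i D_i)^c$ being $\varphi$-null. *)

theory Defs
  imports "HOL-Probability.Probability"
begin

definition min_normal_law :: "nat \<Rightarrow> real measure" where
  "min_normal_law lam =
     distr (PiM {..<lam} (\<lambda>_. density lborel std_normal_density)) borel
           (\<lambda>\<omega>. Min (\<omega> ` {..<lam}))"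

text \<open>One-step transition kernel of the first coordinate of the evolution path on f(x) = [x]_1:
  p' = (1-c) p + sqrt(c(2-c)) Z, Z ~ min of lam standard normals.\<close>
definition csa_kernel :: "real \<Rightarrow> nat \<Rightarrow> real \<Rightarrow> real measure" where
  "csa_kernel c lam x =
     distr (min_normal_law lam) borel (\<lambda>z. (1 - c) * x + sqrt (c * (2 - c)) * z)"

fun kernel_pow :: "(real \<Rightarrow> real measure) \<Rightarrow> nat \<Rightarrow> real \<Rightarrow> real measure" where
  "kernel_pow P 0 x = return borel x"
| "kernel_pow P (Suc m) x = bind (kernel_pow P m x) P"

definition phi_irreducible :: "(real \<Rightarrow> real measure) \<Rightarrow> real measure \<Rightarrow> bool" where
  "phi_irreducible P \<phi> \<longleftrightarrow>
     sets \<phi> = sets borel \<and> emeasure \<phi> UNIV \<noteq> 0 \<and>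
     (\<forall>A \<in> sets borel. emeasure \<phi> A > 0 \<longrightarrow>
        (\<forall>x. \<exists>m\<ge>1. emeasure (kernel_pow P m x) A > 0))"

definition small_set :: "(real \<Rightarrow> real measure) \<Rightarrow> real set \<Rightarrow> bool" where
  "small_set P C \<longleftrightarrow> C \<in> sets borel \<and>
     (\<exists>m\<ge>1. \<exists>\<nu>. sets \<nu> = sets borel \<and> emeasure \<nu> UNIV \<noteq> 0 \<and>
        (\<forall>x\<in>C. \<forall>B\<in>sets borel. emeasure (kernel_pow P m x) B \<ge> emeasure \<nu> B))"

definition aperiodic_wrt :: "(real \<Rightarrow> real measure) \<Rightarrow> real measure \<Rightarrow> bool" where
  "aperiodic_wrt P \<phi> \<longleftrightarrow>
     \<not> (\<exists>d::nat. \<exists>D :: nat \<Rightarrow> real set. d \<ge> 2 \<and>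
          (\<forall>i<d. D i \<in> sets borel) \<and>
          (\<forall>i<d. \<forall>j<d. i \<noteq> j \<longrightarrow> D i \<inter> D j = {}) \<and>
          (\<forall>i<d. \<forall>x\<in>D i. emeasure (P x) (D ((i + 1) mod d)) = 1) \<and>
          emeasure \<phi> (- (\<Union>i<d. D i)) = 0)"

end

theory Submission
  imports Defs
begin

abbreviation "NN \<equiv> density lborel std_normal_density"

lemma NN_prob: "prob_space NN"
  by (rule prob_space_normal_density) simp

lemma NN_fin: "finite_measure NN"
  using NN_prob by (simp add: prob_space_def)

lemma sets_NN[simp]: "sets NN = sets borel" by simp

lemma minlaw_prob: "prob_space (min_normal_law lam)"
  unfolding min_normal_law_def
  by (intro prob_space.prob_space_distr prob_space_PiM NN_prob) measurable

lemma sets_minlaw[simp]: "sets (min_normal_law lam) = sets borel"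
  unfolding min_normal_law_def by simp

lemma kernel_prob: "prob_space (csa_kernel c lam x)"
  unfolding csa_kernel_def
  by (intro prob_space.prob_space_distr minlaw_prob) (auto cong: measurable_cong_sets)

lemma kernel_meas: "csa_kernel c lam \<in> borel \<rightarrow>\<^sub>M subprob_algebra borel"
proof -
  have "(\<lambda>x. distr (min_normal_law lam) borel (\<lambda>z. (1 - c) * x + sqrt (c * (2 - c)) * z)) \<in> borel \<rightarrow>\<^sub>M subprob_algebra borel"
    apply (rule measurable_distr2[where M=borel])
     apply measurable
    using prob_space_imp_subprob_space[OF minlaw_prob[of lam]] by (simp add: space_subprob_algebra)
  then show ?thesis unfolding csa_kernel_def[abs_def] .
qed

lemma kp1: "kernel_pow P 1 x = P x" if "P \<in> borel \<rightarrow>\<^sub>M subprob_algebra borel"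
  using that by (simp add: bind_return)

lemma leb_affine:
  fixes s t :: real assumes "s > 0" "E \<in> sets borel"
  shows "emeasure lborel E = ennreal s * emeasure lborel {z. t + s * z \<in> E}"
proof -
  have "emeasure lborel E = emeasure (density (distr lborel borel (\<lambda>x. t + s * x)) (\<lambda>_. ennreal (abs s))) E"
    using lborel_real_affine[of s t] assms by simp
  also have "\<dots> = ennreal s * emeasure (distr lborel borel (\<lambda>x. t + s * x)) E"
    using assms by (subst emeasure_density_const) auto
  also have "\<dots> = ennreal s * emeasure lborel {z. t + s * z \<in> E}"
    using assms by (subst emeasure_distr) (auto simp: vimage_def)
  finally show ?thesis .
qed

lemma kernel_emeasure:
  assumes "B \<in> sets borel"
  shows "emeasure (csa_kernel c lam x) B = emeasure (PiM {..<lam} (\<lambda>_. NN))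
     {\<omega> \<in> space (PiM {..<lam} (\<lambda>_. NN)). (1 - c) * x + sqrt (c * (2 - c)) * Min (\<omega> ` {..<lam}) \<in> B}"
proof -
  have m: "(\<lambda>\<omega>. Min (\<omega> ` {..<lam})) \<in> borel_measurable (PiM {..<lam} (\<lambda>_. NN))"
    by measurable
  have "emeasure (csa_kernel c lam x) B = emeasure (min_normal_law lam) {z. (1 - c) * x + sqrt (c * (2 - c)) * z \<in> B}"
    unfolding csa_kernel_def using assms
    by (subst emeasure_distr) (auto simp: vimage_def cong: measurable_cong_sets)
  also have "\<dots> = emeasure (PiM {..<lam} (\<lambda>_. NN))
     {\<omega> \<in> space (PiM {..<lam} (\<lambda>_. NN)). (1 - c) * x + sqrt (c * (2 - c)) * Min (\<omega> ` {..<lam}) \<in> B}"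
    unfolding min_normal_law_def using assms m
    by (subst emeasure_distr) (auto simp: vimage_def Int_def conj_commute)
  finally show ?thesis .
qed

lemma PS: "product_sigma_finite (\<lambda>_::nat. NN)"
  unfolding product_sigma_finite_def using prob_space_imp_sigma_finite[OF NN_prob] by simp

lemma emeasure_PiM_NN:
  assumes "finite I" "\<And>i. i \<in> I \<Longrightarrow> F i \<in> sets borel"
  shows "emeasure (PiM I (\<lambda>_::nat. NN)) (Pi\<^sub>E I F) = (\<Prod>i\<in>I. emeasure NN (F i))"
  using product_sigma_finite.emeasure_PiM[OF PS, of I F] assms by simp

lemma dens_mono: "\<bar>z\<bar> \<le> M \<Longrightarrow> std_normal_density M \<le> std_normal_density z"
  unfolding std_normal_density_def
  using abs_le_square_iff[of z M] by (intro mult_left_mono) auto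

lemma dens_pos: "std_normal_density z > 0"
  unfolding std_normal_density_def by simp

lemma dens_ne0[simp]: "std_normal_density z \<noteq> 0"
  using dens_pos[of z] by linarith

lemma NN_lower:
  assumes "F \<in> sets borel" "\<And>z. z \<in> F \<Longrightarrow> \<bar>z\<bar> \<le> M"
  shows "ennreal (std_normal_density M) * emeasure lborel F \<le> emeasure NN F"
proof -
  have "ennreal (std_normal_density M) * emeasure lborel F = (\<integral>\<^sup>+ z. ennreal (std_normal_density M) * indicator F z \<partial>lborel)"
    using assms by (simp add: nn_integral_cmult_indicator)
  also have "\<dots> \<le> (\<integral>\<^sup>+ z. ennreal (std_normal_density z) * indicator F z \<partial>lborel)"
    using assms dens_mono by (intro nn_integral_mono) (auto simp: indicator_def)
  also have "\<dots> = emeasure NN F" using assms by (simp add: emeasure_density)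
  finally show ?thesis .
qed

lemma NN_null:
  assumes "F \<in> sets borel" "emeasure lborel F = 0"
  shows "emeasure NN F = 0"
proof -
  have "F \<in> null_sets lborel" using assms by (simp add: null_sets_def)
  then have ae: "AE z in lborel. z \<notin> F" by (rule AE_not_in)
  have "(\<integral>\<^sup>+ z. ennreal (std_normal_density z) * indicator F z \<partial>lborel) = 0"
    using assms by (subst nn_integral_0_iff_AE) (auto intro: eventually_mono[OF ae] simp: indicator_def)
  then show ?thesis using assms by (simp add: emeasure_density)
qed

lemma NN_pos:
  assumes "F \<in> sets borel" "emeasure lborel F > 0"
  shows "emeasure NN F > 0"
proof (rule ccontr)
  assume "\<not> emeasure NN F > 0"
  then have "(\<integral>\<^sup>+ z. ennreal (std_normal_density z) * indicator F z \<partial>lborel) = 0"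
    using assms by (simp add: emeasure_density)
  then have "AE z in lborel. ennreal (std_normal_density z) * indicator F z = 0"
    using assms by (subst (asm) nn_integral_0_iff_AE) auto
  then have "AE z in lborel. z \<notin> F"
    by (rule eventually_mono) (use dens_pos in \<open>auto simp: indicator_def split: if_splits\<close>)
  then have "F \<in> null_sets lborel" using assms by (simp add: AE_iff_measurable[OF _ refl])
  then show False using assms by (simp add: null_sets_def)
qed

definition Kc :: "real \<Rightarrow> nat \<Rightarrow> real \<Rightarrow> real \<Rightarrow> real" where
  "Kc c lam R r = std_normal_density ((r + R) / sqrt (c * (2 - c))) / sqrt (c * (2 - c))
      * (measure NN {(r + R) / sqrt (c * (2 - c))<..}) ^ (lam - 1)"

lemma NN_tail_pos: "measure NN {M<..} > 0"
proof -
  have "emeasure lborel {M<..<M+1} > 0" by simp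
  then have "emeasure NN {M<..<M+1} > 0" by (intro NN_pos) auto
  also have "\<dots> \<le> emeasure NN {M<..}" by (intro emeasure_mono) auto
  finally have "emeasure NN {M<..} > 0" .
  then show ?thesis using finite_measure.emeasure_eq_measure[OF NN_fin] by simp
qed

lemma Kc_pos:
  assumes "0 < c" "c < 1" shows "Kc c lam R r > 0"
proof -
  have "sqrt (c * (2 - c)) > 0" using assms by simp
  then show ?thesis unfolding Kc_def using dens_pos NN_tail_pos by simp
qed

lemma lower:
  assumes c: "0 < c" "c < 1" and lam: "lam \<ge> 1" and x: "\<bar>x\<bar> \<le> R" and B: "B \<in> sets borel"
  shows "ennreal (Kc c lam R r) * emeasure lborel (B \<inter> {-r..r}) \<le> emeasure (csa_kernel c lam x) B"
proof -
  note [measurable] = B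
  define s where "s = sqrt (c * (2 - c))"
  have s: "s > 0" using c by (simp add: s_def)
  define M where "M = (r + R) / s"
  define a where "a = (1 - c) * x"
  have a: "\<bar>a\<bar> \<le> R"
  proof -
    have "\<bar>a\<bar> = (1 - c) * \<bar>x\<bar>" using c by (simp add: a_def abs_mult)
    also have "\<dots> \<le> \<bar>x\<bar>" using c by (intro mult_left_le_one_le) auto
    finally show ?thesis using x by simp
  qed
  define q where "q = measure NN {M<..}"
  have q: "q \<ge> 0" by (simp add: q_def)
  define F0 where "F0 = {z. a + s * z \<in> B \<inter> {-r..r}}"
  have F0m: "F0 \<in> sets borel"
  proof -
    have "(\<lambda>z. a + s * z) \<in> borel_measurable borel" by simp
    from measurable_sets_borel[OF this, of "B \<inter> {-r..r}"] B show ?thesis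
      by (simp add: F0_def vimage_def)
  qed
  have F0b: "\<bar>z\<bar> \<le> M" if "z \<in> F0" for z
  proof -
    have "\<bar>s * z\<bar> \<le> r + R" using that a by (auto simp: F0_def)
    then have "\<bar>z\<bar> * s \<le> r + R" using s by (simp add: abs_mult mult.commute)
    then show ?thesis using s by (simp add: M_def pos_le_divide_eq)
  qed
  define F where "F i = (if i = 0 then F0 else {M<..})" for i :: nat
  let ?P = "PiM {..<lam} (\<lambda>_::nat. NN)"
  have sub: "Pi\<^sub>E {..<lam} F \<subseteq> {\<omega> \<in> space ?P. (1 - c) * x + sqrt (c * (2 - c)) * Min (\<omega> ` {..<lam}) \<in> B}"
  proof
    fix \<omega> assume w: "\<omega> \<in> Pi\<^sub>E {..<lam} F"
    have "0 < lam" using lam by simp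
    then have w0: "\<omega> 0 \<in> F0" using w by (auto simp: F_def PiE_iff dest!: bspec[of _ _ 0])
    have "Min (\<omega> ` {..<lam}) = \<omega> 0"
    proof (rule Min_eqI)
      show "finite (\<omega> ` {..<lam})" by simp
      show "\<omega> 0 \<in> \<omega> ` {..<lam}" using lam by auto
      fix y assume "y \<in> \<omega> ` {..<lam}"
      then obtain i where i: "i < lam" "y = \<omega> i" by auto
      show "\<omega> 0 \<le> y"
      proof (cases "i = 0")
        case False
        then have "\<omega> i > M" using w i by (auto simp: F_def PiE_iff dest!: bspec[of _ _ i])
        moreover have "\<omega> 0 \<le> M" using F0b[OF w0] by simp
        ultimately show ?thesis using i by simp
      qed (use i in simp)
    qed
    moreover have "\<omega> \<in> space ?P" using w by (simp add: space_PiM PiE_iff)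
    ultimately show "\<omega> \<in> {\<omega> \<in> space ?P. (1 - c) * x + sqrt (c * (2 - c)) * Min (\<omega> ` {..<lam}) \<in> B}"
      using w0 by (simp add: F0_def a_def s_def)
  qed
  obtain k where k: "lam = Suc k" using lam by (cases lam) auto
  have "emeasure ?P (Pi\<^sub>E {..<lam} F) = (\<Prod>i<lam. emeasure NN (F i))"
    using F0m by (intro emeasure_PiM_NN) (auto simp: F_def)
  also have "\<dots> = emeasure NN F0 * emeasure NN {M<..} ^ (lam - 1)"
    unfolding k by (subst prod.lessThan_Suc_shift) (simp add: F_def)
  finally have e1: "emeasure ?P (Pi\<^sub>E {..<lam} F) = emeasure NN F0 * ennreal q ^ (lam - 1)"
    using finite_measure.emeasure_eq_measure[OF NN_fin] by (simp add: q_def)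
  have "ennreal (Kc c lam R r) * emeasure lborel (B \<inter> {-r..r})
        = ennreal (Kc c lam R r) * (ennreal s * emeasure lborel F0)"
    unfolding F0_def using leb_affine[OF s, of "B \<inter> {-r..r}" a] B by simp
  also have "\<dots> = ennreal (Kc c lam R r * s) * emeasure lborel F0"
    using Kc_pos[OF c, of lam R r] s by (simp add: ennreal_mult mult.assoc)
  also have "Kc c lam R r * s = std_normal_density M * q ^ (lam - 1)"
    using s c by (simp add: Kc_def M_def q_def s_def)
  also have "ennreal (std_normal_density M * q ^ (lam - 1)) * emeasure lborel F0
        = (ennreal (std_normal_density M) * emeasure lborel F0) * ennreal q ^ (lam - 1)"
    using q dens_pos[of M] by (simp add: ennreal_mult ennreal_power mult_ac)
  also have "\<dots> \<le> emeasure NN F0 * ennreal q ^ (lam - 1)"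
    by (intro mult_right_mono NN_lower F0m F0b) auto
  also have "\<dots> \<le> emeasure ?P {\<omega> \<in> space ?P. (1 - c) * x + sqrt (c * (2 - c)) * Min (\<omega> ` {..<lam}) \<in> B}"
    unfolding e1[symmetric] by (intro emeasure_mono sub) measurable
  also have "\<dots> = emeasure (csa_kernel c lam x) B"
    using kernel_emeasure[OF B] by simp
  finally show ?thesis .
qed

lemma abs_cont:
  assumes c: "0 < c" "c < 1" and lam: "lam \<ge> 1" and B: "B \<in> sets borel" and B0: "emeasure lborel B = 0"
  shows "emeasure (csa_kernel c lam x) B = 0"
proof -
  note [measurable] = B
  define s where "s = sqrt (c * (2 - c))"
  have s: "s > 0" using c by (simp add: s_def)
  define a where "a = (1 - c) * x"
  define E where "E = {z. a + s * z \<in> B}"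
  have Em: "E \<in> sets borel"
  proof -
    have "(\<lambda>z. a + s * z) \<in> borel_measurable borel" by simp
    from measurable_sets_borel[OF this B] show ?thesis by (simp add: E_def vimage_def)
  qed
  have "ennreal s * emeasure lborel E = 0" using leb_affine[OF s B, of a] B0 by (simp add: E_def)
  then have "emeasure lborel E = 0" using s by simp
  then have NE: "emeasure NN E = 0" using NN_null Em by blast
  define A where "A i = Pi\<^sub>E {..<lam} (\<lambda>j. if j = i then E else UNIV)" for i :: nat
  let ?P = "PiM {..<lam} (\<lambda>_::nat. NN)"
  have Am: "A i \<in> sets ?P" for i unfolding A_def using Em by (intro sets_PiM_I_finite) auto
  have A0: "emeasure ?P (A i) = 0" if i: "i < lam" for i
  proof -
    have "emeasure ?P (A i) = (\<Prod>j<lam. emeasure NN (if j = i then E else UNIV))"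
      unfolding A_def using Em by (intro emeasure_PiM_NN) auto
    also have "\<dots> = emeasure NN E * (\<Prod>j\<in>{..<lam} - {i}. emeasure NN (if j = i then E else UNIV))"
      using i by (subst prod.remove[of _ i]) auto
    also have "\<dots> = 0" using NE by simp
    finally show ?thesis .
  qed
  have sub: "{\<omega> \<in> space ?P. (1 - c) * x + sqrt (c * (2 - c)) * Min (\<omega> ` {..<lam}) \<in> B} \<subseteq> (\<Union>i<lam. A i)"
  proof
    fix \<omega> assume w: "\<omega> \<in> {\<omega> \<in> space ?P. (1 - c) * x + sqrt (c * (2 - c)) * Min (\<omega> ` {..<lam}) \<in> B}"
    have "Min (\<omega> ` {..<lam}) \<in> \<omega> ` {..<lam}" using lam by (intro Min_in) (auto simp: lessThan_empty_iff)
    then obtain i where i: "i < lam" "Min (\<omega> ` {..<lam}) = \<omega> i" by auto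
    have "\<omega> \<in> A i" using w i by (auto simp: A_def E_def a_def s_def space_PiM PiE_iff)
    then show "\<omega> \<in> (\<Union>i<lam. A i)" using i by auto
  qed
  have "emeasure (csa_kernel c lam x) B \<le> emeasure ?P (\<Union>i<lam. A i)"
    unfolding kernel_emeasure[OF B] using Am by (intro emeasure_mono sub) auto
  also have "\<dots> \<le> (\<Sum>i<lam. emeasure ?P (A i))"
    using Am by (intro emeasure_subadditive_finite) auto
  also have "\<dots> = 0" using A0 by simp
  finally show ?thesis by simp
qed

lemma kpos:
  assumes c: "0 < c" "c < 1" and lam: "lam \<ge> 1" and B: "B \<in> sets borel" and Bp: "emeasure lborel B > 0"
  shows "emeasure (csa_kernel c lam x) B > 0"
proof -
  have "\<exists>n::nat. emeasure lborel (B \<inter> {- real n..real n}) > 0"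
  proof (rule ccontr)
    assume "\<not> ?thesis"
    then have "\<forall>n::nat. B \<inter> {- real n..real n} \<in> null_sets lborel" using B by (auto simp: null_sets_def)
    then have "(\<Union>n::nat. B \<inter> {- real n..real n}) \<in> null_sets lborel" by blast
    moreover have "(\<Union>n::nat. B \<inter> {- real n..real n}) = B"
    proof (intro equalityI subsetI)
      fix y assume "y \<in> B"
      moreover obtain n :: nat where "\<bar>y\<bar> \<le> real n" using real_arch_simple by blast
      ultimately show "y \<in> (\<Union>n::nat. B \<inter> {- real n..real n})" by (auto simp: abs_le_iff intro!: exI[of _ n])
    qed auto
    ultimately show False using Bp by (simp add: null_sets_def)
  qed
  then obtain n :: nat where n: "emeasure lborel (B \<inter> {- real n..real n}) > 0" by blast
  have "0 < ennreal (Kc c lam \<bar>x\<bar> (real n)) * emeasure lborel (B \<inter> {- real n..real n})"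
    using Kc_pos[OF c] n by (simp add: ennreal_zero_less_mult_iff)
  also have "\<dots> \<le> emeasure (csa_kernel c lam x) B" by (rule lower[OF c lam _ B]) simp
  finally show ?thesis .
qed

lemma kernel_space[simp]: "space (csa_kernel c lam x) = UNIV"
  unfolding csa_kernel_def by simp

lemma sets_kernel'[simp]: "sets (csa_kernel c lam x) = sets borel"
  unfolding csa_kernel_def by simp

theorem lemma12:
  fixes c d_sigma :: real and lam n :: nat
  assumes "0 < c" "c < 1" "lam \<ge> 1" "d_sigma > 0" "n \<ge> 1"
  shows "(\<exists>\<phi>. phi_irreducible (csa_kernel c lam) \<phi>)
       \<and> (\<forall>\<phi>. phi_irreducible (csa_kernel c lam) \<phi> \<longrightarrow> aperiodic_wrt (csa_kernel c lam) \<phi>)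
       \<and> (\<forall>C :: real set. compact C \<longrightarrow> small_set (csa_kernel c lam) C)"
proof (intro conjI allI impI)
  note c = assms(1,2) and lam = assms(3)
  have kp: "kernel_pow (csa_kernel c lam) 1 x = csa_kernel c lam x" for x
    by (rule kp1[OF kernel_meas])
  have U: "emeasure lborel (UNIV :: real set) \<noteq> 0"
  proof
    assume "emeasure lborel (UNIV :: real set) = 0"
    moreover have "emeasure lborel {0::real..1} \<le> emeasure lborel (UNIV :: real set)"
      by (intro emeasure_mono) auto
    ultimately show False by simp
  qed
  show "\<exists>\<phi>. phi_irreducible (csa_kernel c lam) \<phi>"
    unfolding phi_irreducible_def
    by (rule exI[of _ lborel]) (use U kpos[OF c lam] kp in \<open>auto intro!: exI[of _ 1]\<close>)
next
  note c = assms(1,2) and lam = assms(3)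
  fix \<phi> assume phi: "phi_irreducible (csa_kernel c lam) \<phi>"
  show "aperiodic_wrt (csa_kernel c lam) \<phi>"
    unfolding aperiodic_wrt_def
  proof
    assume "\<exists>d::nat. \<exists>D :: nat \<Rightarrow> real set. d \<ge> 2 \<and>
          (\<forall>i<d. D i \<in> sets borel) \<and>
          (\<forall>i<d. \<forall>j<d. i \<noteq> j \<longrightarrow> D i \<inter> D j = {}) \<and>
          (\<forall>i<d. \<forall>x\<in>D i. emeasure (csa_kernel c lam x) (D ((i + 1) mod d)) = 1) \<and>
          emeasure \<phi> (- (\<Union>i<d. D i)) = 0"
    then obtain d :: nat and D where d: "d \<ge> 2" and Dm: "\<forall>i<d. D i \<in> sets borel"
      and disj: "\<forall>i<d. \<forall>j<d. i \<noteq> j \<longrightarrow> D i \<inter> D j = {}"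
      and cyc: "\<forall>i<d. \<forall>x\<in>D i. emeasure (csa_kernel c lam x) (D ((i + 1) mod d)) = 1"
      and nul: "emeasure \<phi> (- (\<Union>i<d. D i)) = 0" by blast
    have "(\<Union>i<d. D i) \<noteq> {}"
    proof
      assume "(\<Union>i<d. D i) = {}"
      then have "emeasure \<phi> UNIV = 0" using nul by simp
      then show False using phi by (simp add: phi_irreducible_def)
    qed
    then obtain i x where i: "i < d" and x: "x \<in> D i" by auto
    define j where "j = (i + 1) mod d"
    define k where "k = (j + 1) mod d"
    have j: "j < d" and k: "k < d" using d by (auto simp: j_def k_def)
    have jk: "j \<noteq> k"
    proof
      assume "j = k"
      then have "(j + 1) mod d = j mod d" using j by (simp add: k_def)
      then have e: "(j + 1) mod d = j" using j by simp
      show False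
      proof (cases "j + 1 < d")
        case True then show False using e by simp
      next
        case False
        then have "j + 1 = d" using j by linarith
        then show False using e d by auto
      qed
    qed
    have Pj: "emeasure (csa_kernel c lam x) (D j) = 1" using cyc i x by (simp add: j_def)
    then have "D j \<noteq> {}" by auto
    then obtain y where y: "y \<in> D j" by auto
    have "emeasure (csa_kernel c lam y) (D k) = 1" using cyc j y by (simp add: k_def)
    then have "emeasure lborel (D k) \<noteq> 0" using abs_cont[OF c lam, of "D k" y] Dm k by auto
    then have Pk: "emeasure (csa_kernel c lam x) (D k) > 0" using kpos[OF c lam, of "D k" x] Dm k
      by (simp add: zero_less_iff_neq_zero)
    have "emeasure (csa_kernel c lam x) (D j \<union> D k) = emeasure (csa_kernel c lam x) (D j) + emeasure (csa_kernel c lam x) (D k)"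
      using Dm j k disj jk by (intro plus_emeasure[symmetric]) auto
    also have "\<dots> > 1" using Pj Pk by simp
    finally have "emeasure (csa_kernel c lam x) (D j \<union> D k) > 1" .
    moreover have "emeasure (csa_kernel c lam x) (D j \<union> D k) \<le> 1"
      by (rule prob_space.emeasure_le_1[OF kernel_prob])
    ultimately show False by simp
  qed
next
  note c = assms(1,2) and lam = assms(3)
  fix C :: "real set" assume C: "compact C"
  have kp: "kernel_pow (csa_kernel c lam) 1 x = csa_kernel c lam x" for x
    by (rule kp1[OF kernel_meas])
  have kp': "return borel x \<bind> csa_kernel c lam = csa_kernel c lam x" for x
    by (rule bind_return[OF kernel_meas]) simp
  obtain R where R: "\<forall>x\<in>C. \<bar>x\<bar> \<le> R" using compact_imp_bounded[OF C] bounded_real by blast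
  define K where "K = Kc c lam R 1"
  have K: "K > 0" using Kc_pos[OF c] by (simp add: K_def)
  define \<nu> :: "real measure" where "\<nu> = density lborel (\<lambda>y. ennreal K * indicator {-1..1} y)"
  have nuB: "emeasure \<nu> B = ennreal K * emeasure lborel (B \<inter> {-1..1})" if B: "B \<in> sets borel" for B
  proof -
    note B[measurable]
    have [measurable]: "{-1..1::real} \<in> sets borel" by simp
    have fm: "(\<lambda>y. ennreal K * indicator {-1..1::real} y) \<in> borel_measurable borel"
      by (intro borel_measurable_times_ennreal borel_measurable_indicator) auto
    have "emeasure \<nu> B = (\<integral>\<^sup>+ y. ennreal K * indicator {-1..1} y * indicator B y \<partial>lborel)"
      unfolding \<nu>_def by (rule emeasure_density) (simp only: measurable_lborel2 fm, use B in simp)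
    also have "\<dots> = (\<integral>\<^sup>+ y. ennreal K * indicator (B \<inter> {-1..1}) y \<partial>lborel)"
      by (auto intro!: nn_integral_cong simp: indicator_def)
    also have "\<dots> = ennreal K * emeasure lborel (B \<inter> {-1..1})"
      using B by (intro nn_integral_cmult_indicator) auto
    finally show ?thesis .
  qed
  have 1: "C \<in> sets borel" using C by (rule borel_compact)
  have 2: "sets \<nu> = sets borel" by (simp add: \<nu>_def)
  have "emeasure lborel {-1..1::real} = ennreal 2" using emeasure_lborel_Icc[of "-1::real" 1] by simp
  then have 3: "emeasure \<nu> UNIV \<noteq> 0" using nuB[of UNIV] K by simp
  have 4: "\<forall>x\<in>C. \<forall>B\<in>sets borel. emeasure (kernel_pow (csa_kernel c lam) 1 x) B \<ge> emeasure \<nu> B"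
      using R by (auto simp: kp' nuB K_def intro!: lower[OF c lam])
  show "small_set (csa_kernel c lam) C"
    unfolding small_set_def using 1 2 3 4 by (intro conjI exI[of _ "1::nat"] exI[of _ \<nu>]) auto
qed

end
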